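(* For all $R\in(R_1,R_\infty)$, $\check H_c(R)$ is the unique zero of the derivative $\check x_R'$ in $\overline{\mathcal H_0(R)}$. It is a simple zero if $R\ne R_c$, and a double zero if $R=R_c$.
   Context: Let $R_1=\sqrt3$, $R_c=\sqrt7$, $R_\infty=\frac{1+3\sqrt3}2$. For $R\in(R_1,R_c]$ set $\check H_c(R)=\frac{R^2-3}2$ and $\check U_R(H)=\frac{(3-10R^2+3R^4)+(1-R^4)H-2(1-R^2)H^2-H^3}{R^2(3-R^2)^2(4-3R+R^3)^2}H$. For $R\in[R_c,R_\infty)$ set $\check H_c(R)=\frac{5+4R-R^2-\sqrt{3(5-R)(1+R)(R^2-7)}}{13+2R-2R^2}$ and $\check U_R(H)=-\frac{(13+2R-2R^2)^2H}{256(5-R)^2(4+R)^2(7-R+R^2)^2}\big(8(1+R)(5-R)(19-10R-2R^2-3(1-2R)H)+12(1-2R)(13+2R-2R^2)H^2+(13+2R-2R^2)^2H^3\big)$. ($\check H_c(R)$ is the smallest positive zero of $\check U_R'$.) Let $\check x_R(H)=\check U_R(H)/\check U_R(\check H_c(R))$, a polynomial in $H$. Let $\mathcal H_0(R)$ be the connected component of $\check x_R^{-1}(\mathbb D)$ containing $0$, where $\mathbb D$ is the open unit disk, and $\overline{\mathcal H_0(R)}$ its closure; it is known that $\check x_R$ is a conformal bijection from $\mathcal H_0(R)$ onto $\mathbb D$ extending to a homeomorphism $\overline{\mathcal H_0(R)}\to\overline{\mathbb D}$. *)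

theory Defs
  imports "HOL-Analysis.Analysis"
begin

definition R1 :: real where "R1 = sqrt 3"
definition Rc :: real where "Rc = sqrt 7"
definition Rinf :: real where "Rinf = (1 + 3 * sqrt 3) / 2"

text \<open>The critical point \<open>H_c(R)\<close>; first formula on \<open>(R1, Rc]\<close>, second on \<open>[Rc, Rinf)\<close>
  (they agree at \<open>Rc\<close>).\<close>
definition Hc :: "real \<Rightarrow> real" where
  "Hc R = (if R \<le> Rc then (R^2 - 3) / 2
           else (5 + 4*R - R^2 - sqrt (3 * (5 - R) * (1 + R) * (R^2 - 7))) / (13 + 2*R - 2*R^2))"

definition U :: "real \<Rightarrow> complex \<Rightarrow> complex" where
  "U R H = (let r = complex_of_real R in
     (if R \<le> Rc then
        ((3 - 10*r^2 + 3*r^4) + (1 - r^4)*H - 2*(1 - r^2)*H^2 - H^3)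
          / (r^2 * (3 - r^2)^2 * (4 - 3*r + r^3)^2) * H
      else
        - ((13 + 2*r - 2*r^2)^2 * H) / (256 * (5 - r)^2 * (4 + r)^2 * (7 - r + r^2)^2)
          * (8*(1 + r)*(5 - r)*(19 - 10*r - 2*r^2 - 3*(1 - 2*r)*H)
             + 12*(1 - 2*r)*(13 + 2*r - 2*r^2)*H^2 + (13 + 2*r - 2*r^2)^2 * H^3)))"

definition xR :: "real \<Rightarrow> complex \<Rightarrow> complex" where
  "xR R H = U R H / U R (complex_of_real (Hc R))"

definition H0 :: "real \<Rightarrow> complex set" where
  "H0 R = connected_component_set (xR R -` ball 0 1) 0"

end

theory Submission
  imports Defs
begin



lemma Re_pow2: "Re (w^2) = Re w ^ 2 - Im w ^ 2" for w :: complex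
  by (simp add: power2_eq_square)
lemma Im_pow2: "Im (w^2) = 2 * Re w * Im w" for w :: complex
  by (simp add: power2_eq_square)
lemma Re_pow3: "Re (w^3) = Re w ^ 3 - 3 * Re w * Im w ^ 2" for w :: complex
  by (simp add: power3_eq_cube power2_eq_square algebra_simps)
lemma Re_pow4: "Re (w^4) = Re w ^ 4 - 6 * Re w ^ 2 * Im w ^ 2 + Im w ^ 4" for w :: complex
proof -
  have "w^4 = w^2 * w^2" by (simp flip: power_add)
  then show ?thesis by (simp add: power2_eq_square algebra_simps power4_eq_xxxx)
qed



lemma abstract_crit:
  fixes x :: "complex \<Rightarrow> complex" and h a b c :: real
  assumes xdef: "\<And>z. x z = 1 + of_real a * (z - of_real h)^2 + of_real b * (z - of_real h)^3
                          + of_real c * (z - of_real h)^4"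
    and x0: "x 0 = 0" and hpos: "h > 0" and a: "a \<le> 0" and b: "b > 0" and c: "c < 0"
  and Hdef: "H = connected_component_set (x -` ball 0 1) 0"
  shows "of_real h \<in> closure H"
    "deriv x (of_real h) = 0"
    "\<forall>z \<in> closure H. deriv x z = 0 \<longrightarrow> z = of_real h"
    "(deriv ^^ 2) x (of_real h) = 2 * of_real a"
    "(deriv ^^ 3) x (of_real h) = 6 * of_real b"
proof -
  have xe: "x = (\<lambda>z. 1 + of_real a * (z - of_real h)^2 + of_real b * (z - of_real h)^3
                          + of_real c * (z - of_real h)^4)" using xdef by auto
  have d1: "deriv x = (\<lambda>z. 2 * of_real a * (z - of_real h) + 3 * of_real b * (z - of_real h)^2
                          + 4 * of_real c * (z - of_real h)^3)"
  proof
    fix z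
    show "deriv x z = 2 * of_real a * (z - of_real h) + 3 * of_real b * (z - of_real h)^2
                          + 4 * of_real c * (z - of_real h)^3"
      unfolding xe
      by (rule DERIV_imp_deriv) (auto intro!: derivative_eq_intros simp: algebra_simps power2_eq_square power3_eq_cube)
  qed
  have d2: "deriv (deriv x) = (\<lambda>z. 2 * of_real a + 6 * of_real b * (z - of_real h)
                          + 12 * of_real c * (z - of_real h)^2)"
  proof
    fix z
    show "deriv (deriv x) z = 2 * of_real a + 6 * of_real b * (z - of_real h)
                          + 12 * of_real c * (z - of_real h)^2"
      unfolding d1
      by (rule DERIV_imp_deriv) (auto intro!: derivative_eq_intros simp: algebra_simps power2_eq_square power3_eq_cube)
  qed
  have d3: "deriv (deriv (deriv x)) = (\<lambda>z. 6 * of_real b + 24 * of_real c * (z - of_real h))"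
  proof
    fix z
    show "deriv (deriv (deriv x)) z = 6 * of_real b + 24 * of_real c * (z - of_real h)"
      unfolding d2
      by (rule DERIV_imp_deriv) (auto intro!: derivative_eq_intros simp: algebra_simps power2_eq_square power3_eq_cube)
  qed
  show "deriv x (of_real h) = 0" by (simp add: d1)
  show "(deriv ^^ 2) x (of_real h) = 2 * of_real a" by (simp add: d2 numeral_2_eq_2)
  show "(deriv ^^ 3) x (of_real h) = 6 * of_real b" by (simp add: d3 numeral_3_eq_3)

  define S where "S = {z. Re z - h < 0 \<and> Im z ^ 2 < 3 * (Re z - h)^2}"
  define T where "T = {z. 0 < Re z - h \<or> 3 * (Re z - h)^2 < Im z ^ 2}"
  define Sc where "Sc = {z. Re z - h \<le> 0 \<and> Im z ^ 2 \<le> 3 * (Re z - h)^2}"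
  have oS: "open S" unfolding S_def by (intro open_Collect_conj open_Collect_less continuous_intros)
  have oT: "open T" unfolding T_def by (intro open_Collect_disj open_Collect_less continuous_intros)
  have cSc: "closed Sc" unfolding Sc_def by (intro closed_Collect_conj closed_Collect_le continuous_intros)
  have SSc: "S \<subseteq> Sc" unfolding S_def Sc_def by auto
  have ST: "S \<inter> T = {}" unfolding S_def T_def by auto
  have Reray: "Re (x z) \<ge> 1" if z1: "Re z - h \<le> 0" and z2: "Im z ^ 2 = 3 * (Re z - h)^2" for z
  proof -
    define u where "u = Re z - h"
    define v where "v = Im z"
    have w: "Re (z - of_real h) = u" "Im (z - of_real h) = v" by (simp_all add: u_def v_def)
    have u0: "u \<le> 0" using z1 by (simp add: u_def)
    have v2: "v^2 = 3*u^2" using z2 by (simp add: u_def v_def)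
    have v4: "v^4 = 9*u^4"
    proof -
      have "v^4 = (v^2)^2" by simp
      also have "\<dots> = 9*u^4" using v2 by simp
      finally show ?thesis .
    qed
    have "Re (x z) = 1 + a * (u^2 - v^2) + b * (u^3 - 3 * u * v^2) + c*(u^4 - 6 * u^2 * v^2 + v^4)"
      by (simp add: xdef Re_pow2 Re_pow3 Re_pow4 w u_def v_def algebra_simps)
    also have "\<dots> = 1 - 2*a*u^2 - 8*b*u^3 - 8*c*u^4" unfolding v2 v4 by (simp add: algebra_simps power2_eq_square power3_eq_cube power4_eq_xxxx)
    also have "\<dots> \<ge> 1"
    proof -
      have u3: "u^3 \<le> 0"
      proof -
        have "u * u^2 \<le> 0" by (rule mult_nonpos_nonneg[OF u0 zero_le_power2])
        then show ?thesis by (simp add: power2_eq_square power3_eq_cube mult.assoc)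
      qed
      have "a*u^2 \<le> 0" using a by (simp add: mult_nonpos_nonneg)
      moreover have "b*u^3 \<le> 0" using b u3 by (simp add: mult_nonneg_nonpos)
      moreover have "c*u^4 \<le> 0" using c by (simp add: mult_nonpos_nonneg)
      ultimately show ?thesis by linarith
    qed
    finally show ?thesis .
  qed
  have PST: "x -` ball 0 1 \<subseteq> S \<union> T"
  proof
    fix z assume z: "z \<in> x -` ball 0 1"
    show "z \<in> S \<union> T"
    proof (rule ccontr)
      assume "z \<notin> S \<union> T"
      then have z1: "Re z - h \<le> 0" and z2: "Im z ^ 2 = 3*(Re z - h)^2" unfolding S_def T_def
        by (auto simp: not_less)
      have "1 \<le> Re (x z)" by (rule Reray[OF z1 z2])
      also have "\<dots> \<le> cmod (x z)" by (rule complex_Re_le_cmod)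
      finally show False using z by simp
    qed
  qed
  have conn: "connected H" unfolding Hdef by (rule connected_connected_component)
  have HP: "H \<subseteq> x -` ball 0 1" unfolding Hdef by (rule connected_component_subset)
  have S0: "0 \<in> S" using hpos by (simp add: S_def)
  have H0: "0 \<in> H" unfolding Hdef using x0 by (simp add: connected_component_refl)
  have "S \<inter> H = {} \<or> T \<inter> H = {}"
    by (rule connectedD[OF conn oS oT]) (use ST HP PST in auto)
  then have "T \<inter> H = {}" using S0 H0 by auto
  then have HS: "H \<subseteq> S" using HP PST by auto
  have cH: "closure H \<subseteq> Sc" by (rule closure_minimal) (use HS SSc cSc in auto)
  show "\<forall>z \<in> closure H. deriv x z = 0 \<longrightarrow> z = of_real h"
  proof (intro ballI impI)
    fix z assume zH: "z \<in> closure H" and dz: "deriv x z = 0"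
    define w where "w = z - of_real h"
    have u0: "Re w \<le> 0" using zH cH by (auto simp: Sc_def w_def)
    have eq: "w * (2* of_real a + 3* of_real b*w + 4* of_real c*w^2) = 0"
      using dz by (simp add: d1 w_def algebra_simps power2_eq_square power3_eq_cube)
    show "z = of_real h"
    proof (rule ccontr)
      assume "z \<noteq> of_real h"
      then have wn: "w \<noteq> 0" by (simp add: w_def)
      with eq have q: "2* of_real a + 3* of_real b*w + 4* of_real c*w^2 = 0" by simp
      have "Im (2* of_real a + 3* of_real b*w + 4* of_real c*w^2) = 0" using q by simp
      then have "Im w * (3*b + 8*c*Re w) = 0" by (simp add: Im_pow2 algebra_simps)
      moreover have "3*b + 8*c*Re w > 0"
      proof -
        have "c * Re w \<ge> 0" using c u0 by (simp add: mult_nonpos_nonpos)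
        then show ?thesis using b by linarith
      qed
      ultimately have im0: "Im w = 0" by simp
      have "Re (2* of_real a + 3* of_real b*w + 4* of_real c*w^2) = 0" using q by simp
      then have re: "2*a + 3*b*Re w + 4*c*(Re w)^2 = 0" by (simp add: Re_pow2 im0)
      have "Re w \<noteq> 0" using wn im0 complex_eqI by force
      then have ul: "Re w < 0" using u0 by simp
      have "b * Re w < 0" using b ul by (simp add: mult_pos_neg)
      moreover have "c * (Re w)^2 < 0" using c ul by (simp add: mult_neg_pos)
      ultimately show False using re a by linarith
    qed
  qed
  define f where "f t = 1 + a*(t-h)^2 + b*(t-h)^3 + c*(t-h)^4" for t
  have xf: "x (of_real t) = of_real (f t)" for t by (simp add: xdef f_def)
  have f0: "f 0 = 0" using x0 xf[of 0] by simp
  have fb: "0 \<le> f t \<and> f t < 1" if t0: "0 \<le> t" and th: "t < h" for t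
  proof -
    define s where "s = t - h"
    have s1: "-h \<le> s" "s < 0" using t0 th by (auto simp: s_def)
    have "f t - f 0 = a*(s^2 - h^2) + b*(s^3 + h^3) + c*(s^4 - h^4)"
      by (simp add: f_def s_def algebra_simps)
    moreover have "s^2 \<le> h^2"
    proof -
      have "(-s)^2 \<le> h^2" by (rule power_mono) (use s1 in auto)
      then show ?thesis by simp
    qed
    moreover have "s^3 + h^3 \<ge> 0"
    proof -
      have "s^3 + h^3 = (s+h)*(s^2 - s*h + h^2)" by (simp add: algebra_simps power2_eq_square power3_eq_cube)
      moreover have "s^2 - s*h + h^2 \<ge> 0" 
      proof -
        have "s * h < 0" using s1 hpos by (simp add: mult_neg_pos)
        moreover have "s^2 \<ge> 0" "h^2 \<ge> 0" by simp_all
        ultimately show ?thesis by linarith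
      qed
      ultimately show ?thesis using s1 by simp
    qed
    moreover have "s^4 \<le> h^4"
    proof -
      have "(s^2)^2 \<le> (h^2)^2" by (rule power_mono[OF \<open>s^2 \<le> h^2\<close> zero_le_power2])
      then show ?thesis by (simp flip: power_mult)
    qed
    ultimately have "f t - f 0 \<ge> 0" using a b c
      by (smt (verit) mult_nonneg_nonneg mult_nonpos_nonpos)
    moreover have "f t < 1"
    proof -
      have "f t = 1 + a* s^2 + b* s^3 + c* s^4" by (simp add: f_def s_def)
      moreover have "a* s^2 \<le> 0" using a by (simp add: mult_nonpos_nonneg)
      moreover have "b * s^3 < 0"
      proof -
        have "s * s^2 < 0" using s1 by (simp add: mult_neg_pos)
        then have "s^3 < 0" by (simp add: power2_eq_square power3_eq_cube mult.assoc)
        then show ?thesis using b by (simp add: mult_pos_neg)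
      qed
      moreover have "c* s^4 < 0" using c s1 by (simp add: mult_neg_pos)
      ultimately show ?thesis by linarith
    qed
    ultimately show ?thesis using f0 by simp
  qed
  define Seg where "Seg = complex_of_real ` {0..<h}"
  have cSeg: "connected Seg" unfolding Seg_def
    by (intro connected_continuous_image continuous_intros) (simp add: is_interval_connected)
  have SegP: "Seg \<subseteq> x -` ball 0 1"
  proof
    fix z assume "z \<in> Seg"
    then obtain t where t: "0 \<le> t" "t < h" "z = of_real t" by (auto simp: Seg_def)
    then show "z \<in> x -` ball 0 1" using fb[OF t(1,2)] by (simp add: xf)
  qed
  have Seg0: "0 \<in> Seg" using hpos by (auto simp: Seg_def image_iff intro!: bexI[of _ 0])
  have SegH: "Seg \<subseteq> H" unfolding Hdef
    by (rule connected_component_maximal) (use Seg0 cSeg SegP in auto)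
  have "of_real h \<in> closure Seg"
    unfolding closure_approachable
  proof (intro allI impI)
    fix e :: real assume e: "e > 0"
    define t where "t = max 0 (h - e/2)"
    have "of_real t \<in> Seg" using hpos e by (auto simp: Seg_def t_def)
    moreover have "dist (complex_of_real t) (of_real h) < e" using hpos e
      by (auto simp: t_def dist_real_def)
    ultimately show "\<exists>y\<in>Seg. dist y (complex_of_real h) < e" by blast
  qed
  then show "of_real h \<in> closure H" using closure_mono[OF SegH] by auto
qed


lemma tay1:
  fixes r z :: complex
  shows "((3 - 10*r^2 + 3*r^4) + (1 - r^4)*z - 2*(1 - r^2)*z^2 - z^3) * z
     = (r^2-3)^2*(14*r^2 - r^4 - 1)/16 + (r^2-7)*(r^2+1)/2 * (z - (r^2-3)/2)^2
       + 4 * (z - (r^2-3)/2)^3 - (z - (r^2-3)/2)^4"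
  by (simp add: field_simps) algebra

lemma branch1:
  assumes R1: "R1 < R" and Rc: "R \<le> Rc"
  shows "\<exists>a b c. (\<forall>z. xR R z = 1 + of_real a * (z - of_real (Hc R))^2 + of_real b * (z - of_real (Hc R))^3
            + of_real c * (z - of_real (Hc R))^4) \<and> a \<le> 0 \<and> 0 < b \<and> c < 0 \<and> (a = 0 \<longleftrightarrow> R = Rc) \<and> 0 < Hc R"
proof -
  have s3pos: "sqrt 3 > 0" by simp
  have Rpos: "R > 0" using R1 s3pos unfolding R1_def by linarith
  have s3: "3 < R^2"
  proof -
    have "(sqrt 3)^2 < R^2" using R1 by (intro power_strict_mono) (auto simp: R1_def)
    then show ?thesis by simp
  qed
  have s7: "R^2 \<le> 7"
  proof -
    have "R^2 \<le> (sqrt 7)^2" using Rc Rpos by (intro power_mono) (auto simp: Rc_def)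
    then show ?thesis by simp
  qed
  define h where "h = (R^2 - 3)/2"
  have hc: "Hc R = h" using Rc by (simp add: Hc_def h_def)
  define V0 where "V0 = (R^2-3)^2*(14*R^2 - R^4 - 1)/16"
  define V2 where "V2 = (R^2-7)*(R^2+1)/2"
  have V0pos: "V0 > 0"
  proof -
    have "(R^2-7)^2 < 16"
    proof -
      have "(7 - R^2)^2 < 4^2" using s3 s7 by (intro power_strict_mono) auto
      then show ?thesis by (simp add: power2_commute)
    qed
    then have "14*R^2 - R^4 - 1 > 0" by (simp add: power2_eq_square power4_eq_xxxx algebra_simps)
    moreover have "(R^2-3)^2 > 0" using s3 by simp
    ultimately show ?thesis by (simp add: V0_def)
  qed
  define r where "r = complex_of_real R"
  define den where "den = r^2 * (3 - r^2)^2 * (4 - 3*r + r^3)^2"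
  have den0: "den \<noteq> 0"
  proof -
    have "4 - 3*R + R^3 > 0"
    proof -
      have "R * (R^2 - 3) > 0" using Rpos s3 by simp
      then show ?thesis by (simp add: algebra_simps power2_eq_square power3_eq_cube)
    qed
    moreover have "3 - R^2 \<noteq> 0" using s3 by simp
    ultimately have nz: "R^2 * (3 - R^2)^2 * (4 - 3*R + R^3)^2 \<noteq> 0" using Rpos by simp
    have "den = of_real (R^2 * (3 - R^2)^2 * (4 - 3*R + R^3)^2)" by (simp add: den_def r_def)
    then show ?thesis using nz by (simp only: of_real_eq_0_iff not_False_eq_True)
  qed
  have Ue: "U R z = (((3 - 10*r^2 + 3*r^4) + (1 - r^4)*z - 2*(1 - r^2)*z^2 - z^3) * z) / den" for z
    using Rc by (simp add: U_def Let_def r_def den_def)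
  have hr: "complex_of_real h = (r^2-3)/2" by (simp add: h_def r_def)
  have Ue2: "U R z = (of_real V0 + of_real V2 * (z - of_real h)^2 + 4*(z - of_real h)^3 - (z - of_real h)^4) / den" for z
    unfolding Ue tay1 hr by (simp add: V0_def V2_def r_def)
  have Uh: "U R (of_real h) = of_real V0 / den" by (simp add: Ue2)
  have x: "xR R z = 1 + of_real (V2/V0) * (z - of_real h)^2 + of_real (4/V0) * (z - of_real h)^3
       + of_real (-1/V0) * (z - of_real h)^4" for z
    using V0pos den0 by (simp add: xR_def hc Ue2 Uh field_simps)
  have a: "V2/V0 \<le> 0" using s7 V0pos by (simp add: V2_def divide_nonpos_pos mult_nonpos_nonneg)
  have a0: "V2/V0 = 0 \<longleftrightarrow> R = Rc"
  proof -
    have "V2/V0 = 0 \<longleftrightarrow> R^2 = 7" using V0pos by (simp add: V2_def add_nonneg_eq_0_iff)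
    also have "\<dots> \<longleftrightarrow> R = Rc" using Rpos real_sqrt_unique[of R 7] by (auto simp: Rc_def)
    finally show ?thesis .
  qed
  have hpos: "0 < Hc R" using s3 by (simp add: hc h_def)
  show ?thesis
    by (rule exI[of _ "V2/V0"], rule exI[of _ "4/V0"], rule exI[of _ "-1/V0"])
       (use x a a0 hpos V0pos in \<open>auto simp: hc\<close>)
qed


lemma tay2:
  fixes r z h :: "'a::field"
  defines "A \<equiv> 13 + 2*r - 2*r^2" and "m \<equiv> (5-r)*(1+r)"
  assumes rel: "A*h^2 - 2*m*h + 2*m = 0" and A: "A \<noteq> 0"
  shows "(8*(1 + r)*(5 - r)*(19 - 10*r - 2*r^2 - 3*(1 - 2*r)*z) + 12*(1 - 2*r)*A*z^2 + A^2 * z^3) * z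
     = (8*(1 + r)*(5 - r)*(19 - 10*r - 2*r^2 - 3*(1 - 2*r)*h) + 12*(1 - 2*r)*A*h^2 + A^2 * h^3) * h
       + (6*A^2*h^2 + 36*(1-2*r)*A*h - 24*m*(1-2*r)) * (z-h)^2
       + (4*A^2*h + 12*(1-2*r)*A) * (z-h)^3 + A^2 * (z-h)^4"
proof -
  have d: "A * (4*A^2*h^3 + 36*(1-2*r)*A*h^2 - 48*m*(1-2*r)*h + 8*m*(19-10*r-2*r^2)) = 0"
    using rel unfolding A_def m_def by algebra
  then have d0: "4*A^2*h^3 + 36*(1-2*r)*A*h^2 - 48*m*(1-2*r)*h + 8*m*(19-10*r-2*r^2) = 0"
    using A by simp
  show ?thesis using d0 unfolding A_def m_def by algebra
qed

lemma branch2: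
  assumes Rc: "Rc < R" and Ri: "R < Rinf"
  shows "\<exists>a b c. (\<forall>z. xR R z = 1 + of_real a * (z - of_real (Hc R))^2 + of_real b * (z - of_real (Hc R))^3
            + of_real c * (z - of_real (Hc R))^4) \<and> a \<le> 0 \<and> 0 < b \<and> c < 0 \<and> (a = 0 \<longleftrightarrow> R = Rc) \<and> 0 < Hc R"
proof -
  have s7pos: "sqrt 7 > 0" by simp
  have Rpos: "R > 0" using Rc s7pos unfolding Rc_def by linarith
  have s7: "7 < R^2"
  proof -
    have "(sqrt 7)^2 < R^2" using Rc by (intro power_strict_mono) (auto simp: Rc_def)
    then show ?thesis by simp
  qed
  have R2: "R > 2"
  proof (rule ccontr)
    assume "\<not> R > 2"
    then have "R * R \<le> 2 * 2" using Rpos by (intro mult_mono) auto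
    then show False using s7 by (simp add: power2_eq_square)
  qed
  define A where "A = 13 + 2*R - 2*R^2"
  have Apos: "A > 0"
  proof -
    have "2*R - 1 < 3 * sqrt 3" using Ri by (simp add: Rinf_def field_simps)
    moreover have "2*R - 1 > 0" using R2 by simp
    ultimately have "(2*R-1)^2 < (3 * sqrt 3)^2" by (intro power_strict_mono) auto
    then have "(2*R-1)^2 < 27" by (simp add: power_mult_distrib)
    then show ?thesis by (simp add: A_def power2_eq_square algebra_simps)
  qed
  have R5: "R < 3.2"
  proof (rule ccontr)
    assume "\<not> R < 3.2"
    then have "R * R \<ge> 3.2 * R" using Rpos by (intro mult_right_mono) auto
    then show False using Apos \<open>\<not> R < 3.2\<close> unfolding A_def power2_eq_square by linarith
  qed
  define m where "m = 5 + 4*R - R^2"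
  have mf: "m = (5-R)*(1+R)" by (simp add: m_def algebra_simps power2_eq_square)
  have mpos: "m > 0" using R5 Rpos by (simp add: mf)
  define D where "D = 3 * (5 - R) * (1 + R) * (R^2 - 7)"
  have Dm: "D = 3*m*(R^2-7)" by (simp add: D_def mf)
  have Dpos: "D > 0" using mpos s7 by (simp add: Dm)
  define q where "q = sqrt D"
  have q2: "q^2 = D" using Dpos by (simp add: q_def)
  have qpos: "q > 0" using Dpos by (simp add: q_def)
  have mD: "m^2 - D = 2*m*A" by (simp add: Dm m_def A_def power2_eq_square algebra_simps)
  have qm: "q < m"
  proof -
    have "D < m^2" using mD mpos Apos by (smt (verit) mult_pos_pos)
    then have "sqrt D < sqrt (m^2)" by (rule real_sqrt_less_mono)
    then show ?thesis using mpos by (simp add: q_def)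
  qed
  have q3: "3*(R^2-7) \<le> q"
  proof -
    have "(3*(R^2-7))^2 \<le> D"
    proof -
      have "3*(R^2-7) \<le> m" using Apos by (simp add: m_def A_def algebra_simps)
      then have "3*(R^2-7) * (3*(R^2-7)) \<le> m * (3*(R^2-7))" using s7 by (intro mult_right_mono) auto
      then show ?thesis by (simp add: Dm power2_eq_square algebra_simps)
    qed
    then have "sqrt ((3*(R^2-7))^2) \<le> sqrt D" by (rule real_sqrt_le_mono)
    then show ?thesis using s7 by (simp add: q_def)
  qed
  define h where "h = (m - q)/A"
  have hc: "Hc R = h" using Rc by (simp add: Hc_def h_def m_def q_def D_def A_def)
  have Ah: "A*h = m - q" using Apos by (simp add: h_def)
  have hpos: "h > 0" using qm Apos by (simp add: h_def)
  have g2A: "m - q \<le> 2*A" using q3 by (simp add: m_def A_def algebra_simps)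
  have rel: "A*h^2 - 2*((5-R)*(1+R))*h + 2*((5-R)*(1+R)) = 0"
  proof -
    have "A * (A*h^2 - 2*m*h + 2*m) = (A*h)^2 - 2*m*(A*h) + 2*m*A" by (simp add: algebra_simps power2_eq_square)
    also have "\<dots> = 0" unfolding Ah using q2 mD by (simp add: algebra_simps power2_eq_square)
    finally show ?thesis using Apos by (simp add: mf)
  qed
  define P0 where "P0 = (8*(1 + R)*(5 - R)*(19 - 10*R - 2*R^2 - 3*(1 - 2*R)*h) + 12*(1 - 2*R)*A*h^2 + A^2 * h^3) * h"
  define V2 where "V2 = 6*A^2*h^2 + 36*(1-2*R)*A*h - 24*((5-R)*(1+R))*(1-2*R)"
  define V3 where "V3 = 4*A^2*h + 12*(1-2*R)*A"
  have P0e: "A * P0 = h * (6*m*((2*R-1)*(m-q) - 2*A*(R^2+4*R-9)))"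
    using Ah q2 unfolding P0_def Dm m_def A_def by algebra
  have V2e: "V2 = 12*(m*(R^2-7) + (R^2+2*R-8)*q)"
    using Ah q2 unfolding V2_def Dm m_def A_def by algebra
  have V3e: "V3 = 4*A*((m-q) + 3*(1-2*R))"
    using Ah unfolding V3_def by algebra
  have P0neg: "P0 < 0"
  proof -
    have "(2*R-1)*(m-q) \<le> (2*R-1)*(2*A)" using g2A R2 by (intro mult_left_mono) auto
    also have "\<dots> < 2*A*(R^2+4*R-9)"
    proof -
      have "2*R - 1 < R^2+4*R-9" using s7 R2 by simp
      then have "(2*A)*(2*R - 1) < (2*A)*(R^2+4*R-9)" using Apos by (intro mult_strict_left_mono) auto
      then show ?thesis by (simp only: mult.commute)
    qed
    finally have "(2*R-1)*(m-q) - 2*A*(R^2+4*R-9) < 0" by simp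
    then have "h * (6*m*((2*R-1)*(m-q) - 2*A*(R^2+4*R-9))) < 0" using hpos mpos by (simp add: mult_pos_neg)
    then have "A * P0 < 0" unfolding P0e .
    then show ?thesis using Apos by (simp add: mult_less_0_iff)
  qed
  have V2pos: "V2 > 0"
  proof -
    have "m*(R^2-7) > 0" using mpos s7 by simp
    moreover have "(R^2+2*R-8)*q > 0" using s7 R2 qpos by simp
    ultimately show ?thesis unfolding V2e by simp
  qed
  have V3neg: "V3 < 0"
  proof -
    have "m + 3*(1-2*R) < 0" using s7 R2 by (simp add: m_def)
    then have "(m-q) + 3*(1-2*R) < 0" using qpos by simp
    then show ?thesis unfolding V3e using Apos by (simp add: mult_pos_neg)
  qed

  define r where "r = complex_of_real R"
  define Ac where "Ac = 13 + 2*r - 2*r^2"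
  have Acr: "Ac = of_real A" by (simp add: Ac_def A_def r_def)
  have Ac0: "Ac \<noteq> 0" using Apos by (simp add: Acr)
  define den where "den = 256 * (5 - r)^2 * (4 + r)^2 * (7 - r + r^2)^2"
  have den0: "den \<noteq> 0"
  proof -
    have "R < R^2" using R2 by (simp add: power2_eq_square)
    then have "7 - R + R^2 > 0" by simp
    then have nz: "256 * (5 - R)^2 * (4 + R)^2 * (7 - R + R^2)^2 \<noteq> 0" using R5 Rpos by simp
    have "den = of_real (256 * (5 - R)^2 * (4 + R)^2 * (7 - R + R^2)^2)" by (simp add: den_def r_def)
    then show ?thesis using nz by (simp only: of_real_eq_0_iff not_False_eq_True)
  qed
  define Vc where "Vc z = (8*(1 + r)*(5 - r)*(19 - 10*r - 2*r^2 - 3*(1 - 2*r)*z) + 12*(1 - 2*r)*Ac*z^2 + Ac^2 * z^3) * z" for z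
  have Ue0: "U R z = - (Ac^2 * z) / den * (8*(1 + r)*(5 - r)*(19 - 10*r - 2*r^2 - 3*(1 - 2*r)*z) + 12*(1 - 2*r)*Ac*z^2 + Ac^2 * z^3)" for z
    using Rc by (simp add: U_def Let_def r_def Ac_def den_def not_le)
  have Ue: "U R z = ((-(Ac^2)) / den) * Vc z" for z
    unfolding Ue0 Vc_def by (simp add: algebra_simps)
  have relc: "(13 + 2*r - 2*r^2)*(of_real h)^2 - 2*((5-r)*(1+r))* of_real h + 2*((5-r)*(1+r)) = 0"
  proof -
    have "complex_of_real (A*h^2 - 2*((5-R)*(1+R))*h + 2*((5-R)*(1+R))) = 0" using rel by simp
    then show ?thesis by (simp add: A_def r_def)
  qed
  have t: "Vc z = Vc (of_real h) + (6*Ac^2*(of_real h)^2 + 36*(1-2*r)*Ac* of_real h - 24*((5-r)*(1+r))*(1-2*r)) * (z - of_real h)^2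
      + (4*Ac^2* of_real h + 12*(1-2*r)*Ac) * (z-of_real h)^3 + Ac^2*(z - of_real h)^4" for z
    unfolding Vc_def Ac_def by (rule tay2) (use relc Ac0 in \<open>simp_all add: Ac_def\<close>)
  have c2: "6*Ac^2*(of_real h)^2 + 36*(1-2*r)*Ac* of_real h - 24*((5-r)*(1+r))*(1-2*r) = of_real V2"
    by (simp add: V2_def Acr r_def)
  have c3: "4*Ac^2* of_real h + 12*(1-2*r)*Ac = of_real V3"
    by (simp add: V3_def Acr r_def)
  have c4: "Ac^2 = of_real (A^2)" by (simp add: Acr)
  have VcP0: "Vc (of_real h) = of_real P0" by (simp add: Vc_def P0_def Acr r_def)
  have P00: "complex_of_real P0 \<noteq> 0" using P0neg by simp
  have K0: "(-(Ac^2)) / den \<noteq> 0" using Ac0 den0 by simp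
  have x: "xR R z = 1 + of_real (V2/P0) * (z - of_real h)^2 + of_real (V3/P0) * (z - of_real h)^3
       + of_real (A^2/P0) * (z - of_real h)^4" for z
  proof -
    have "xR R z = Vc z / Vc (of_real h)" using K0 by (simp add: xR_def hc Ue)
    also have "\<dots> = (of_real P0 + of_real V2 * (z - of_real h)^2 + of_real V3 * (z - of_real h)^3
       + of_real (A^2) * (z - of_real h)^4) / of_real P0"
      by (subst t) (simp only: c2 c3 VcP0, simp only: c4)
    also have "\<dots> = 1 + of_real (V2/P0) * (z - of_real h)^2 + of_real (V3/P0) * (z - of_real h)^3
       + of_real (A^2/P0) * (z - of_real h)^4"
      using P00 by (simp add: field_simps)
    finally show ?thesis .
  qed
  have a: "V2/P0 < 0" using V2pos P0neg by (simp add: divide_pos_neg)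
  have b: "V3/P0 > 0" using V3neg P0neg by (simp add: divide_neg_neg)
  have c: "A^2/P0 < 0" using Apos P0neg by (simp add: divide_pos_neg)
  show ?thesis
    by (rule exI[of _ "V2/P0"], rule exI[of _ "V3/P0"], rule exI[of _ "A^2/P0"])
       (use x a b c hpos Rc in \<open>auto simp: hc\<close>)
qed

theorem lemma13:
  fixes R :: real
  assumes "R1 < R" and "R < Rinf"
  shows "complex_of_real (Hc R) \<in> closure (H0 R)
     \<and> deriv (xR R) (complex_of_real (Hc R)) = 0
     \<and> (\<forall>z \<in> closure (H0 R). deriv (xR R) z = 0 \<longrightarrow> z = complex_of_real (Hc R))
     \<and> (R \<noteq> Rc \<longrightarrow> (deriv ^^ 2) (xR R) (complex_of_real (Hc R)) \<noteq> 0)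
     \<and> (R = Rc \<longrightarrow> (deriv ^^ 2) (xR R) (complex_of_real (Hc R)) = 0
                  \<and> (deriv ^^ 3) (xR R) (complex_of_real (Hc R)) \<noteq> 0)"
proof -
  obtain a b c where x: "\<forall>z. xR R z = 1 + of_real a * (z - of_real (Hc R))^2 + of_real b * (z - of_real (Hc R))^3
            + of_real c * (z - of_real (Hc R))^4" and a: "a \<le> 0" and b: "0 < b" and c: "c < 0"
    and a0: "a = 0 \<longleftrightarrow> R = Rc" and hp: "0 < Hc R"
  proof (cases "R \<le> Rc")
    case True
    then show ?thesis using branch1[OF assms(1) True] that by blast
  next
    case False
    then have "Rc < R" by simp
    then show ?thesis using branch2[OF _ assms(2)] that by blast
  qed
  have x0: "xR R 0 = 0" by (simp add: xR_def U_def Let_def)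
  have xe: "\<And>z. xR R z = 1 + of_real a * (z - of_real (Hc R))^2 + of_real b * (z - of_real (Hc R))^3
            + of_real c * (z - of_real (Hc R))^4" using x by blast
  note r = abstract_crit[where x="xR R" and h="Hc R" and a=a and b=b and c=c and H="H0 R",
      OF xe x0 hp a b c H0_def]
  show ?thesis
  proof (intro conjI impI)
    show "complex_of_real (Hc R) \<in> closure (H0 R)" by (rule r(1))
    show "deriv (xR R) (complex_of_real (Hc R)) = 0" by (rule r(2))
    show "\<forall>z \<in> closure (H0 R). deriv (xR R) z = 0 \<longrightarrow> z = complex_of_real (Hc R)" by (rule r(3))
  next
    assume "R \<noteq> Rc"
    then have "a \<noteq> 0" using a0 by simp
    then show "(deriv ^^ 2) (xR R) (complex_of_real (Hc R)) \<noteq> 0" by (simp add: r(4))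
  next
    assume "R = Rc"
    then have "a = 0" using a0 by simp
    then show "(deriv ^^ 2) (xR R) (complex_of_real (Hc R)) = 0" by (simp add: r(4))
    show "(deriv ^^ 3) (xR R) (complex_of_real (Hc R)) \<noteq> 0" using b by (simp add: r(5))
  qed
qed

end
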